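(* Let $0\le c<\sqrt2-1$. Let $a,b_1,b_2$ be positive integers such that $ca$ and $cb_2$ are integers and $b_1/((1+c)b_2)$ is a positive integer. Let $w_1$ be the infinite word $1_{\infty,a}$ or $2_{\infty,a}$, let $w_2=1_{b_1,b_2}2_{b_1,b_2}$, and let $s$ be a (finite) common subsequence of $w_1$ and $w_2$. Then \[\operatorname{span}_{w_1}s+2b_1\ \ge\ (3+c)\operatorname{len} s-\frac{4ab_1}{b_2}.\]
   Context: Words are over the alphabet $\{1,2\}$; $\alpha^m$ denotes letter $\alpha$ repeated $m$ times and $u^m$ denotes $m$ copies of the word $u$ concatenated. For a positive integer $M$ (with the relevant quantities integers), $1_{M,a}=(1^a2^{ca})^{M/((1+c)a)}$ and $2_{M,a}=(2^a1^{ca})^{M/((1+c)a)}$; $1_{\infty,a}$ and $2_{\infty,a}$ denote the infinite repetitions of $1^a2^{ca}$ and $2^a1^{ca}$ respectively. Symbols are distinguishable positions; a common subsequence of $w_1,w_2$ is a pair of subsequences of $w_1$ and $w_2$ equal as words, of length $\operatorname{len} s$. $\operatorname{span}_{w_1}s$ is the length of the shortest block of consecutive symbols of $w_1$ containing the part of $s$ lying in $w_1$. *)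

theory Defs
  imports Complex_Main
begin

(* Words over {1,2}: finite words are nat lists, infinite words are functions nat => nat
   (positions indexed from 0). *)

definition wpow :: "nat list \<Rightarrow> nat \<Rightarrow> nat list" where
  "wpow u m = concat (replicate m u)"

definition one_word :: "real \<Rightarrow> nat \<Rightarrow> nat \<Rightarrow> nat list" where
  "one_word c M a = wpow (replicate a 1 @ replicate (nat \<lfloor>c * a\<rfloor>) 2)
                         (nat \<lfloor>M / ((1 + c) * a)\<rfloor>)"

definition two_word :: "real \<Rightarrow> nat \<Rightarrow> nat \<Rightarrow> nat list" where
  "two_word c M a = wpow (replicate a 2 @ replicate (nat \<lfloor>c * a\<rfloor>) 1)
                         (nat \<lfloor>M / ((1 + c) * a)\<rfloor>)"

definition one_inf :: "real \<Rightarrow> nat \<Rightarrow> nat \<Rightarrow> nat" where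
  "one_inf c a i = (if i mod (a + nat \<lfloor>c * a\<rfloor>) < a then 1 else 2)"

definition two_inf :: "real \<Rightarrow> nat \<Rightarrow> nat \<Rightarrow> nat" where
  "two_inf c a i = (if i mod (a + nat \<lfloor>c * a\<rfloor>) < a then 2 else 1)"

definition common_subseq :: "(nat \<Rightarrow> nat) \<Rightarrow> nat list \<Rightarrow> nat \<Rightarrow> (nat \<Rightarrow> nat) \<Rightarrow> (nat \<Rightarrow> nat) \<Rightarrow> bool" where
  "common_subseq w1 w2 n f g \<longleftrightarrow>
     strict_mono_on {..<n} f \<and> strict_mono_on {..<n} g \<and>
     (\<forall>i<n. g i < length w2 \<and> w1 (f i) = w2 ! (g i))"

definition span1 :: "nat \<Rightarrow> (nat \<Rightarrow> nat) \<Rightarrow> nat" where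
  "span1 n f = (if n = 0 then 0 else f (n - 1) - f 0 + 1)"

end

theory Submission
  imports Defs
begin


definition Oc :: "nat \<Rightarrow> nat \<Rightarrow> nat \<Rightarrow> nat" where
  "Oc a P p = a * (p div P) + min (p mod P) a"

lemma Oc_Suc:
  assumes "a \<le> P" "0 < P"
  shows "Oc a P (Suc p) = Oc a P p + (if p mod P < a then 1 else 0)"
proof (cases "Suc (p mod P) < P")
  case True
  then have "Suc p mod P = Suc (p mod P)" "Suc p div P = p div P"
    by (simp_all add: mod_Suc div_Suc)
  then show ?thesis unfolding Oc_def by auto
next
  case False
  then have m: "p mod P = P - 1" using mod_less_divisor[OF assms(2), of p] by linarith
  then have "Suc p mod P = 0" "Suc p div P = Suc (p div P)"
    using assms(2) by (simp_all add: mod_Suc div_Suc)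
  then show ?thesis unfolding Oc_def using m assms by auto
qed

lemma Oc_mono: assumes "a \<le> P" "0 < P" "p \<le> q" shows "Oc a P p \<le> Oc a P q"
  using assms(3)
proof (induction q)
  case 0 then show ?case by simp
next
  case (Suc q) then show ?case using Oc_Suc[OF assms(1,2), of q] by (auto simp: le_Suc_eq)
qed

lemma Oc_le: assumes "a \<le> P" "0 < P" shows "Oc a P p \<le> p"
proof (induction p)
  case 0 then show ?case by (simp add: Oc_def)
next
  case (Suc p) then show ?case using Oc_Suc[OF assms, of p] by auto
qed

lemma Oc_bounds:
  fixes c :: real
  assumes "0 < a" "0 \<le> c" "real d = c * a" "P = a + d"
  shows "real p \<le> (1 + c) * Oc a P p" "(1 + c) * Oc a P p \<le> real p + d"
proof -
  define q r where "q = p div P" and "r = p mod P"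
  have Pp: "0 < P" using assms by simp
  have p: "real p = real P * q + r" using q_def r_def
    by (metis div_mult_mod_eq of_nat_add of_nat_mult mult.commute)
  have rP: "r < P" using r_def Pp by simp
  have O: "real (Oc a P p) = a * q + min r a" unfolding Oc_def q_def r_def by simp
  have PP: "real P = (1 + c) * a" using assms by (simp add: algebra_simps)
  have key: "real r \<le> (1 + c) * min r a \<and> (1 + c) * min r a \<le> real r + d"
  proof (cases "r \<le> a")
    case True
    then have "c * r \<le> c * a" using assms(2) by (simp add: mult_left_mono)
    then show ?thesis using True assms by (auto simp: algebra_simps min_def)
  next
    case False
    then show ?thesis using rP PP assms by (auto simp: algebra_simps min_def)
  qed
  show "real p \<le> (1 + c) * Oc a P p" "(1 + c) * Oc a P p \<le> real p + d"
    using key unfolding O p PP by (auto simp: algebra_simps)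
qed

lemma nth_wpow: "j < m * length u \<Longrightarrow> wpow u m ! j = u ! (j mod length u)"
proof (induction m arbitrary: j)
  case 0 then show ?case by simp
next
  case (Suc m)
  have w: "wpow u (Suc m) = u @ wpow u m" by (simp add: wpow_def)
  show ?case
  proof (cases "j < length u")
    case True then show ?thesis using w by (simp add: nth_append)
  next
    case False
    then have "j - length u < m * length u" using Suc.prems by auto
    then show ?thesis using w False Suc.IH by (simp add: nth_append mod_if)
  qed
qed

lemma length_wpow: "length (wpow u m) = m * length u"
  by (simp add: wpow_def length_concat sum_list_replicate)

lemma filter_wpow: "length (filter P (wpow u m)) = m * length (filter P u)"
  by (simp add: wpow_def filter_concat length_concat sum_list_replicate map_replicate_const)

definition rho1 :: "nat \<Rightarrow> nat \<Rightarrow> nat \<Rightarrow> nat" where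
  "rho1 Q b2 x = 2 * (x div Q) + (if x mod Q < b2 then 0 else 1)"

definition rho :: "nat \<Rightarrow> nat \<Rightarrow> nat \<Rightarrow> nat \<Rightarrow> nat" where
  "rho k Q b2 j = (if j < k * Q then rho1 Q b2 j else 2 * k - 1 + rho1 Q b2 (j - k * Q))"

lemma rho1_mono: assumes "x \<le> y" "0 < Q" shows "rho1 Q b2 x \<le> rho1 Q b2 y"
proof (cases "x div Q < y div Q")
  case True then show ?thesis unfolding rho1_def by auto
next
  case False
  then have e: "x div Q = y div Q" using div_le_mono[OF assms(1), of Q] by simp
  then have "x mod Q \<le> y mod Q" using assms(1)
    by (metis add_le_cancel_left div_mult_mod_eq)
  then show ?thesis unfolding rho1_def using e by auto
qed

lemma rho1_bound: assumes "x < k * Q" "0 < Q" shows "rho1 Q b2 x \<le> 2 * k - 1"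
proof -
  have "x div Q < k" using assms by (simp add: div_less_iff_less_mult)
  then show ?thesis unfolding rho1_def by auto
qed

lemma rho_mono: assumes "j \<le> j'" "j' < 2 * k * Q" "0 < Q"
  shows "rho k Q b2 j \<le> rho k Q b2 j'"
proof -
  consider "j' < k * Q" | "j < k * Q" "k * Q \<le> j'" | "k * Q \<le> j" using assms by linarith
  then show ?thesis
  proof cases
    case 1 then show ?thesis using assms rho1_mono unfolding rho_def by auto
  next
    case 2 then show ?thesis using rho1_bound[of j k Q b2] assms unfolding rho_def by auto
  next
    case 3 then show ?thesis using assms rho1_mono[of "j - k*Q" "j' - k*Q" Q b2]
      unfolding rho_def by auto
  qed
qed

lemma rho_bound: assumes "j < 2 * k * Q" "0 < Q" shows "rho k Q b2 j \<le> 4 * k - 2"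
proof (cases "j < k * Q")
  case True then show ?thesis using rho1_bound[of j k Q b2] assms unfolding rho_def by auto
next
  case False
  then have "j - k * Q < k * Q" using assms by auto
  then show ?thesis using False rho1_bound[of "j - k*Q" k Q b2] assms unfolding rho_def by auto
qed

definition w2f :: "nat \<Rightarrow> nat \<Rightarrow> nat \<Rightarrow> nat \<Rightarrow> nat" where
  "w2f k Q b2 j = (if j < k * Q then (if j mod Q < b2 then 1 else 2)
                   else (if (j - k * Q) mod Q < b2 then 2 else 1))"

lemma w2f_parity: assumes "0 < k" shows "w2f k Q b2 j = (if even (rho k Q b2 j) then 1 else 2)"
  using assms unfolding w2f_def rho_def rho1_def by auto

lemma rho_strict: assumes "j \<le> j'" "j' < 2 * k * Q" "0 < Q" "0 < k"
  "w2f k Q b2 j \<noteq> w2f k Q b2 j'"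
  shows "rho k Q b2 j < rho k Q b2 j'"
  using rho_mono[OF assms(1-3), of b2] assms(5) w2f_parity[OF assms(4)]
  by (metis le_neq_implies_less)

definition cntf :: "nat \<Rightarrow> nat \<Rightarrow> nat \<Rightarrow> nat \<Rightarrow> nat \<Rightarrow> nat" where
  "cntf al a P x p = (if x = al then Oc a P p else p - Oc a P p)"

lemma cntf_Suc:
  assumes "a \<le> P" "0 < P" "al \<noteq> be"
    "(if p mod P < a then al else be) = x"
  shows "cntf al a P x (Suc p) = cntf al a P x p + 1"
  using assms Oc_Suc[OF assms(1,2), of p] Oc_le[OF assms(1,2), of p]
  unfolding cntf_def by (auto split: if_splits)

lemma cntf_Suc_mono:
  assumes "a \<le> P" "0 < P"
  shows "cntf al a P x p \<le> cntf al a P x (Suc p)"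
  using Oc_Suc[OF assms(1,2), of p] Oc_le[OF assms(1,2), of p]
  unfolding cntf_def by (auto split: if_splits)

lemma cntf_mono:
  assumes "a \<le> P" "0 < P" "p \<le> q"
  shows "cntf al a P x p \<le> cntf al a P x q"
  using assms(3)
proof (induction q)
  case 0 then show ?case by simp
next
  case (Suc q) then show ?case using cntf_Suc_mono[OF assms(1,2), of al x q]
    by (auto simp: le_Suc_eq)
qed

definition Wf :: "real \<Rightarrow> nat \<Rightarrow> nat \<Rightarrow> real" where
  "Wf c al x = (if x = al then 1 + c else (1 + c) / c)"

definition Ef :: "real \<Rightarrow> nat \<Rightarrow> nat \<Rightarrow> nat \<Rightarrow> nat \<Rightarrow> nat \<Rightarrow> real" where
  "Ef c al a P x p = Wf c al x * cntf al a P x p - p"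

lemma Ef_bounds:
  fixes c :: real
  assumes "0 < a" "0 \<le> c" "real d = c * a" "P = a + d" "x = al \<or> 0 < c"
  shows "- real a \<le> Ef c al a P x p \<and> Ef c al a P x p \<le> real d"
proof (cases "x = al")
  case True
  then show ?thesis using Oc_bounds[OF assms(1-4), of p]
    unfolding Ef_def Wf_def cntf_def by (auto simp: algebra_simps)
next
  case False
  then have c: "0 < c" using assms by auto
  have le: "Oc a P p \<le> p" using Oc_le assms by simp
  have e: "Ef c al a P x p = (real p - (1 + c) * Oc a P p) / c"
    using False c le unfolding Ef_def Wf_def cntf_def by (simp add: field_simps of_nat_diff)
  have b: "real p - (1 + c) * Oc a P p \<le> 0" "- real d \<le> real p - (1 + c) * Oc a P p"
    using Oc_bounds[OF assms(1-4), of p] by auto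
  define X where "X = real p - (1 + c) * Oc a P p"
  have "X / c \<le> 0" using b c unfolding X_def by (simp add: divide_le_0_iff)
  moreover have "- real a \<le> X / c" using b c unfolding X_def
    by (simp add: le_divide_eq assms(3) algebra_simps)
  ultimately show ?thesis unfolding e X_def[symmetric] by simp
qed



lemma main_gen:
  fixes c :: real and a d P k Q b2 b1 n al be :: nat and w1 :: "nat \<Rightarrow> nat" and w2 :: "nat list"
    and f g :: "nat \<Rightarrow> nat"
  assumes a0: "0 < a" and c0: "0 \<le> c" and dc: "real d = c * a" and Pd: "P = a + d"
    and cc: "c * c + 2 * c \<le> 1"
    and k0: "0 < k" and Q0: "0 < Q" and b1: "b1 = k * Q"
    and w1: "w1 = (\<lambda>p. if p mod P < a then al else be)" and ab: "al \<noteq> be"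
    and w2: "\<forall>j < 2 * b1. w2 ! j = w2f k Q b2 j" and lw2: "length w2 = 2 * b1"
    and cnt: "length (filter (\<lambda>x. x = al) w2) \<le> b1"
    and cs: "common_subseq w1 w2 n f g"
  shows "real (span1 n f) + 2 * real b1 \<ge> (3 + c) * real n - real (4 * k * P)"
proof (cases "n = 0")
  case True
  have "0 \<le> real P * real k" by simp
  moreover have "0 \<le> real b1" by simp
  ultimately show ?thesis using True by (simp add: span1_def)
      (smt (verit) of_nat_0_le_iff mult_nonneg_nonneg)
next
  case False
  then have n0: "0 < n" by simp
  have aP: "a \<le> P" and P0: "0 < P" using Pd a0 by auto
  have fm: "strict_mono_on {..<n} f" and gm: "strict_mono_on {..<n} g"
    and fg: "\<And>i. i < n \<Longrightarrow> g i < length w2 \<and> w1 (f i) = w2 ! (g i)"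
    using cs unfolding common_subseq_def by auto
  define l where "l i = w1 (f i)" for i
  define W where "W = Wf c al"
  define E where "E = Ef c al a P"
  define S where "S m = (\<Sum>j<m. W (l j))" for m
  define R where "R = rho k Q b2"
  have lw: "\<And>i. i < n \<Longrightarrow> l i = w2f k Q b2 (g i)" and gl: "\<And>i. i < n \<Longrightarrow> g i < 2 * k * Q"
    using fg w2 lw2 b1 unfolding l_def by (auto simp: mult.assoc)
  have lc: "l i = al \<or> 0 < c" for i
  proof (cases "f i mod P < a")
    case True then show ?thesis unfolding l_def w1 by simp
  next
    case False
    then have "0 < d" using Pd P0 mod_less_divisor[OF P0, of "f i"] by linarith
    then show ?thesis using dc c0 a0 by (cases "c = 0") auto
  qed
  have Eb: "- real a \<le> E (l i) p \<and> E (l i) p \<le> real d" for i p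
    unfolding E_def using Ef_bounds[OF a0 c0 dc Pd lc] .
  have Esuc: "E (l i) (Suc (f i)) = E (l i) (f i) + W (l i) - 1" for i
  proof -
    have "cntf al a P (l i) (Suc (f i)) = cntf al a P (l i) (f i) + 1"
      using cntf_Suc[OF aP P0 ab] unfolding l_def w1 by simp
    then show ?thesis unfolding E_def W_def Ef_def by (simp add: algebra_simps)
  qed
  have W0: "0 \<le> W x" for x using c0 unfolding W_def Wf_def by auto
  define Phi where "Phi i = real (f i) + 1 - real (f 0) - S (Suc i)
     + real P * (real (R (g i)) - real (R (g 0))) + E (l i) (Suc (f i)) - E (l 0) (f 0)" for i
  have inv: "i < n \<Longrightarrow> 0 \<le> Phi i" for i
  proof (induction i)
    case 0 then show ?case unfolding Phi_def S_def using Esuc[of 0] by simp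
  next
    case (Suc i)
    then have i: "i < n" "Suc i < n" by auto
    have ff: "f i < f (Suc i)" using strict_mono_onD[OF fm] i by auto
    have gg: "g i < g (Suc i)" using strict_mono_onD[OF gm] i by auto
    have Rm: "R (g i) \<le> R (g (Suc i))" unfolding R_def using rho_mono gg gl[OF i(2)] Q0 by simp
    have SS: "S (Suc (Suc i)) = S (Suc i) + W (l (Suc i))" unfolding S_def by simp
    have d1: "Phi (Suc i) - Phi i = real (f (Suc i)) - real (f i) - W (l (Suc i))
        + real P * (real (R (g (Suc i))) - real (R (g i)))
        + E (l (Suc i)) (Suc (f (Suc i))) - E (l i) (Suc (f i))"
      unfolding Phi_def SS by (simp add: algebra_simps)
    have "0 \<le> Phi (Suc i) - Phi i"
    proof (cases "l (Suc i) = l i")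
      case True
      have cm: "cntf al a P (l i) (Suc (f i)) \<le> cntf al a P (l i) (f (Suc i))"
        using cntf_mono[OF aP P0] ff by simp
      have "E (l i) (f (Suc i)) - E (l i) (Suc (f i))
          = W (l i) * (real (cntf al a P (l i) (f (Suc i))) - real (cntf al a P (l i) (Suc (f i))))
            - (real (f (Suc i)) - real (f i) - 1)"
        unfolding E_def Ef_def W_def by (simp add: algebra_simps)
      moreover have "0 \<le> W (l i) * (real (cntf al a P (l i) (f (Suc i))) - real (cntf al a P (l i) (Suc (f i))))"
        using cm W0 by simp
      moreover have "0 \<le> real P * (real (R (g (Suc i))) - real (R (g i)))" using Rm by simp
      ultimately show ?thesis unfolding d1 using Esuc[of "Suc i"] True by simp
    next
      case False
      then have "w2f k Q b2 (g i) \<noteq> w2f k Q b2 (g (Suc i))" using lw i by auto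
      then have "R (g i) < R (g (Suc i))" unfolding R_def
        using rho_strict[of "g i" "g (Suc i)" k Q b2] gg gl[OF i(2)] Q0 k0 by simp
      then have "R (g i) + 1 \<le> R (g (Suc i))" by simp
      then have "real (R (g i)) + 1 \<le> real (R (g (Suc i)))" by (metis of_nat_1 of_nat_add of_nat_le_iff)
      then have "real P * 1 \<le> real P * (real (R (g (Suc i))) - real (R (g i)))"
        by (intro mult_left_mono) auto
      moreover have "real P = real a + real d" using Pd by simp
      moreover note Eb[of "Suc i" "f (Suc i)"] Eb[of i "Suc (f i)"]
      moreover have "real (f i) + 1 \<le> real (f (Suc i))" using ff by simp
      ultimately show ?thesis unfolding d1 using Esuc[of "Suc i"] by simp
    qed
    then show ?case using Suc by simp
  qed
  define m where "m = n - 1"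
  have m: "m < n" "n = Suc m" using n0 unfolding m_def by auto
  have f0m: "f 0 \<le> f m" using strict_mono_onD[OF fm, of 0 m] m by (cases "m = 0") auto
  have span: "real (span1 n f) = real (f m) + 1 - real (f 0)"
    unfolding span1_def using n0 f0m m_def by (simp add: of_nat_diff)
  have P1: "0 \<le> Phi m" using inv m by simp
  have Rb: "R (g m) \<le> 4 * k - 2" unfolding R_def using rho_bound gl[OF m(1)] Q0 by simp
  then have Rb': "real (R (g m)) \<le> 4 * real k - 2" using k0 by (simp add: of_nat_diff)
  have E2: "E (l m) (Suc (f m)) - E (l 0) (f 0) \<le> real a + real d"
    using Eb[of m "Suc (f m)"] Eb[of 0 "f 0"] by simp
  have "real P * (real (R (g m)) - real (R (g 0))) \<le> real P * (4 * real k - 2)"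
    using Rb' by (intro mult_left_mono) auto
  then have A1: "S n - real (4 * k * P) + real P \<le> real (span1 n f)"
    using P1 E2 unfolding Phi_def span m(2)[symmetric] using Pd by (simp add: algebra_simps)
  define N where "N = card {j. j < n \<and> l j = al}"
  have Sl: "(\<Sum>j<n. (if l j = al then 1 + c else 3 + c)) \<le> S n"
    unfolding S_def
  proof (rule sum_mono)
    fix j assume "j \<in> {..<n}"
    show "(if l j = al then 1 + c else 3 + c) \<le> W (l j)"
    proof (cases "l j = al")
      case True then show ?thesis unfolding W_def Wf_def by simp
    next
      case False
      then have c: "0 < c" using lc by auto
      have "(3 + c) * c \<le> 1 + c" using cc by (simp add: algebra_simps)
      then have "3 + c \<le> (1 + c) / c" using c by (simp add: le_divide_eq)
      then show ?thesis using False unfolding W_def Wf_def by simp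
    qed
  qed
  have Seq: "(\<Sum>j<n. (if l j = al then 1 + c else 3 + c)) = (3 + c) * real n - 2 * real N"
  proof -
    have "(\<Sum>j<n. (if l j = al then 1 + c else 3 + c)) = (\<Sum>j<n. (3 + c) - (if l j = al then 2 else 0))"
      by (rule sum.cong) auto
    also have "\<dots> = (3 + c) * real n - (\<Sum>j<n. (if l j = al then 2 else 0))"
      by (simp add: sum_subtractf)
    also have "(\<Sum>j<n. (if l j = al then 2 else 0 :: real)) = (\<Sum>j\<in>{j \<in> {..<n}. l j = al}. 2)"
      by (rule sum.inter_filter[symmetric]) simp
    also have "\<dots> = 2 * real N" unfolding N_def by (simp add: lessThan_def conj_commute)
    finally show ?thesis .
  qed
  have "N \<le> card {j. j < length w2 \<and> w2 ! j = al}"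
    unfolding N_def
  proof (rule card_inj_on_le)
    show "inj_on g {j. j < n \<and> l j = al}"
      using strict_mono_on_imp_inj_on[OF gm] by (rule inj_on_subset) auto
    show "g ` {j. j < n \<and> l j = al} \<subseteq> {j. j < length w2 \<and> w2 ! j = al}"
      using fg unfolding l_def by auto
  qed auto
  then have "N \<le> b1" using cnt by (simp add: length_filter_conv_card)
  then show ?thesis using A1 Sl Seq by (simp add: algebra_simps)
qed



theorem lemma3p7:
  fixes c :: real and a b1 b2 n :: nat and w1 :: "nat \<Rightarrow> nat" and f g :: "nat \<Rightarrow> nat"
  assumes "0 \<le> c" and "c < sqrt 2 - 1"
    and "a > 0" and "b1 > 0" and "b2 > 0"
    and "c * a \<in> \<int>" and "c * b2 \<in> \<int>"
    and "\<exists>m::nat. m > 0 \<and> real b1 / ((1 + c) * b2) = real m"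
    and "w1 = one_inf c a \<or> w1 = two_inf c a"
    and "common_subseq w1 (one_word c b1 b2 @ two_word c b1 b2) n f g"
  shows "real (span1 n f) + 2 * real b1 \<ge> (3 + c) * real n - 4 * real a * real b1 / real b2"
proof -
  note c0 = assms(1) and a0 = assms(3)
  define d where "d = nat \<lfloor>c * a\<rfloor>"
  define d2 where "d2 = nat \<lfloor>c * b2\<rfloor>"
  define P where "P = a + d"
  define Q where "Q = b2 + d2"
  obtain m :: nat where m: "m > 0" "real b1 / ((1 + c) * b2) = real m" using assms(8) by blast
  have dc: "real d = c * a" unfolding d_def using assms(6) c0
    by (metis Ints_cases floor_of_int of_int_floor_cancel of_nat_nat zero_le_floor
        mult_nonneg_nonneg of_nat_0_le_iff)
  have d2c: "real d2 = c * b2" unfolding d2_def using assms(7) c0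
    by (metis Ints_cases floor_of_int of_int_floor_cancel of_nat_nat zero_le_floor
        mult_nonneg_nonneg of_nat_0_le_iff)
  have kdef: "nat \<lfloor>real b1 / ((1 + c) * real b2)\<rfloor> = m" using m by simp
  have pos: "0 < (1 + c) * real b2" using c0 assms(5) by simp
  have b1r: "real b1 = real m * ((1 + c) * b2)" using m(2) pos by (simp add: field_simps)
  have "real b1 = real m * real Q" unfolding Q_def using b1r d2c by (simp add: algebra_simps)
  then have b1: "b1 = m * Q" by (metis of_nat_eq_iff of_nat_mult)
  have Q0: "0 < Q" unfolding Q_def using assms(5) by simp
  define u1 where "u1 = replicate b2 (1::nat) @ replicate d2 2"
  define u2 where "u2 = replicate b2 (2::nat) @ replicate d2 1"
  have ow: "one_word c b1 b2 = wpow u1 m" unfolding one_word_def u1_def d2_def kdef by simp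
  have tw: "two_word c b1 b2 = wpow u2 m" unfolding two_word_def u2_def d2_def kdef by simp
  define w2 where "w2 = one_word c b1 b2 @ two_word c b1 b2"
  have lu: "length u1 = Q" "length u2 = Q" unfolding u1_def u2_def Q_def by auto
  have lo: "length (one_word c b1 b2) = b1" "length (two_word c b1 b2) = b1"
    unfolding ow tw length_wpow lu by (simp_all add: b1)
  have lw2: "length w2 = 2 * b1" unfolding w2_def using lo by simp
  have w2: "\<forall>j < 2 * b1. w2 ! j = w2f m Q b2 j"
  proof (intro allI impI)
    fix j assume j: "j < 2 * b1"
    show "w2 ! j = w2f m Q b2 j"
    proof (cases "j < b1")
      case True
      have "w2 ! j = one_word c b1 b2 ! j" unfolding w2_def using True lo by (simp add: nth_append)
      also have "j < m * length u1" using True b1 lu by simp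
      then have "one_word c b1 b2 ! j = u1 ! (j mod Q)" unfolding ow by (simp add: nth_wpow lu)
      finally have "w2 ! j = u1 ! (j mod Q)" .
      moreover have "j mod Q < Q" using Q0 by simp
      ultimately show ?thesis using True unfolding w2f_def b1 u1_def Q_def
        by (auto simp: nth_append)
    next
      case False
      have "w2 ! j = two_word c b1 b2 ! (j - b1)" unfolding w2_def using False lo by (simp add: nth_append)
      also have "j - b1 < m * length u2" using False j b1 lu by simp
      then have "two_word c b1 b2 ! (j - b1) = u2 ! ((j - b1) mod Q)" unfolding tw by (simp add: nth_wpow lu)
      finally have "w2 ! j = u2 ! ((j - b1) mod Q)" .
      moreover have "(j - b1) mod Q < Q" using Q0 by simp
      ultimately show ?thesis using False unfolding w2f_def b1 u2_def Q_def
        by (auto simp: nth_append)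
    qed
  qed
  have cnt1: "length (filter (\<lambda>x. x = 1) w2) \<le> b1"
    unfolding w2_def ow tw by (simp add: filter_wpow u1_def u2_def b1 Q_def algebra_simps)
  have cnt2: "length (filter (\<lambda>x. x = 2) w2) \<le> b1"
    unfolding w2_def ow tw by (simp add: filter_wpow u1_def u2_def b1 Q_def algebra_simps)
  have cc: "c * c + 2 * c \<le> 1"
  proof -
    have "0 \<le> c + 1" "c + 1 < sqrt 2" using assms(1,2) by auto
    then have "(c + 1)^2 < (sqrt 2)^2" by (intro power_strict_mono) auto
    then show ?thesis by (simp add: power2_eq_square algebra_simps)
  qed
  have cs: "common_subseq w1 w2 n f g" using assms(10) unfolding w2_def .
  have main: "real (span1 n f) + 2 * real b1 \<ge> (3 + c) * real n - real (4 * m * P)"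
  proof (cases "w1 = one_inf c a")
    case True
    have w1: "w1 = (\<lambda>p. if p mod P < a then 1 else 2)"
      unfolding True one_inf_def P_def d_def by simp
    show ?thesis by (rule main_gen[OF a0 c0 dc P_def cc m(1) Q0 b1 w1 _ w2 lw2 cnt1 cs]) simp
  next
    case False
    then have "w1 = two_inf c a" using assms(9) by simp
    then have w1: "w1 = (\<lambda>p. if p mod P < a then 2 else 1)"
      unfolding two_inf_def P_def d_def by simp
    show ?thesis by (rule main_gen[OF a0 c0 dc P_def cc m(1) Q0 b1 w1 _ w2 lw2 cnt2 cs]) simp
  qed
  have "real (4 * m * P) = 4 * real a * real b1 / real b2"
    unfolding b1r P_def using dc assms(5) by (simp add: field_simps)
  then show ?thesis using main by simp
qed


end
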